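(* Let $C\subset\mathbb{R}^2$ be compact and let $D$ be a closed disc whose center lies in $C$. Then \[\mathrm{diam}(C\cup D)\le\max\left(\mathrm{diam}(C)+\sqrt{\frac{2(\mathrm{area}(C\cup D)-\mathrm{area}(C))}{\pi}},\ \sqrt{\frac{4\,\mathrm{area}(C\cup D)}{\pi}}\right).\]
   Context: $\mathrm{area}$ denotes two-dimensional Lebesgue measure and $\mathrm{diam}(B)=\sup_{x,y\in B}\|x-y\|$ (Euclidean distance). *)

theory Defs
  imports "HOL-Analysis.Analysis"
begin

end

theory Submission
  imports Defs "HOL-Analysis.Analysis"
begin

lemma cball_area:
  fixes m :: "real^2" assumes "h \<ge> 0"
  shows "measure lebesgue (cball m h) = pi * h^2"
proof -
  have "measure lebesgue (cball m h) = measure lborel (cball m h)"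
    by simp
  also have "\<dots> = pi * h^2" using content_cball[OF assms, of m] by (simp add: unit_ball_vol_2)
  finally show ?thesis .
qed

lemma half_disc:
  fixes m u :: "real^2" and h :: real
  assumes h: "h \<ge> 0" and u: "u \<noteq> 0"
  shows "measure lebesgue {x \<in> cball m h. (x - m) \<bullet> u > 0} = pi * h^2 / 2"
proof -
  define P where "P = {x \<in> cball m h. (x - m) \<bullet> u > 0}"
  define N where "N = {x \<in> cball m h. (x - m) \<bullet> u < 0}"
  define Z where "Z = {x \<in> cball m h. (x - m) \<bullet> u = 0}"
  have oP: "open {x. (x - m) \<bullet> u > 0}" 
    by (intro open_Collect_less continuous_intros)
  have oN: "open {x. (x - m) \<bullet> u < 0}" 
    by (intro open_Collect_less continuous_intros)
  have cZ: "closed {x. (x - m) \<bullet> u = 0}" 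
    by (intro closed_Collect_eq continuous_intros)
  have PP: "P = cball m h \<inter> {x. (x - m) \<bullet> u > 0}" by (auto simp: P_def)
  have NN: "N = cball m h \<inter> {x. (x - m) \<bullet> u < 0}" by (auto simp: N_def)
  have ZZ: "Z = cball m h \<inter> {x. (x - m) \<bullet> u = 0}" by (auto simp: Z_def)
  have Pm: "P \<in> lmeasurable" unfolding PP
    by (intro fmeasurable_Int_fmeasurable lmeasurable_cball) (simp add: borel_open oP)
  have Nm: "N \<in> lmeasurable" unfolding NN
    by (intro fmeasurable_Int_fmeasurable lmeasurable_cball) (simp add: borel_open oN)
  have Zm: "Z \<in> lmeasurable" unfolding ZZ
    by (intro fmeasurable_Int_fmeasurable lmeasurable_cball) (simp add: borel_closed cZ)
  have negZ: "negligible Z"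
  proof -
    have "negligible {x. u \<bullet> x = u \<bullet> m}" using negligible_hyperplane u by blast
    moreover have "Z \<subseteq> {x. u \<bullet> x = u \<bullet> m}" by (auto simp: Z_def inner_diff_left inner_diff_right inner_commute)
    ultimately show ?thesis using negligible_subset by blast
  qed
  have img: "N = (\<lambda>x. (-1) *\<^sub>R x + 2 *\<^sub>R m) ` P"
  proof (rule set_eqI, rule iffI)
    fix x assume "x \<in> N"
    have e: "m - (2 *\<^sub>R m - x) = x - m" by (simp add: scaleR_2)
    have "2 *\<^sub>R m - x - m = -(x - m)" by (simp add: scaleR_2)
    then have "2 *\<^sub>R m - x \<in> P" using \<open>x \<in> N\<close> e
      unfolding N_def P_def mem_Collect_eq mem_cball dist_norm
      by (metis inner_minus_left neg_0_less_iff_less norm_minus_commute)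
    moreover have "x = (-1) *\<^sub>R (2 *\<^sub>R m - x) + 2 *\<^sub>R m" by simp
    ultimately show "x \<in> (\<lambda>x. (-1) *\<^sub>R x + 2 *\<^sub>R m) ` P" by blast
  next
    fix x assume "x \<in> (\<lambda>x. (-1) *\<^sub>R x + 2 *\<^sub>R m) ` P"
    then obtain y where "y \<in> P" "x = (-1) *\<^sub>R y + 2 *\<^sub>R m" by blast
    moreover have "m - x = y - m" "x - m = -(y - m)" using \<open>x = _\<close> by (simp_all add: scaleR_2)
    ultimately show "x \<in> N"
      unfolding N_def P_def mem_Collect_eq mem_cball dist_norm
      by (metis inner_minus_left neg_less_0_iff_less norm_minus_commute)
  qed
  have mN: "measure lebesgue N = measure lebesgue P"
    unfolding img using measure_lebesgue_affine[of "-1" "2 *\<^sub>R m" P] by simp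
  have "measure lebesgue (cball m h) = measure lebesgue P + measure lebesgue N + measure lebesgue Z"
    by (rule measure_Un3_negligible[OF Pm Nm Zm])
      (auto simp: P_def N_def Z_def intro: negligible_subset[OF negZ])
  then show ?thesis using mN negligible_imp_measure0[OF negZ] cball_area[OF h, of m]
    by (simp add: P_def)
qed

lemma key:
  fixes C :: "(real^2) set" and c p q :: "real^2" and r :: real
  assumes "compact C" and "c \<in> C" and "r > 0" and p: "p \<in> C" and q: "q \<in> cball c r"
  shows "norm (p - q) \<le> diameter C + sqrt (2 * (measure lebesgue (C \<union> cball c r) - measure lebesgue C) / pi)"
proof -
  define d where "d = diameter C"
  define \<Delta> where "\<Delta> = measure lebesgue (C \<union> cball c r) - measure lebesgue C"
  have bC: "bounded C" using assms(1) compact_imp_bounded by blast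
  have inC: "\<And>x y. x \<in> C \<Longrightarrow> y \<in> C \<Longrightarrow> norm (x - y) \<le> d"
    using diameter_bounded_bound[OF bC] by (simp add: d_def dist_norm)
  have Um: "C \<union> cball c r \<in> lmeasurable" using assms(1) by (intro lmeasurable_compact compact_Un compact_cball)
  have Cs: "C \<in> sets lebesgue" using assms(1) lmeasurable_compact by blast
  have \<Delta>eq: "\<Delta> = measure lebesgue ((C \<union> cball c r) - C)"
    unfolding \<Delta>_def by (rule measurable_measure_Diff[OF Um Cs, symmetric]) auto
  have \<Delta>0: "\<Delta> \<ge> 0" unfolding \<Delta>eq by simp
  define L where "L = norm (q - p)"
  show ?thesis
  proof (cases "L \<le> d")
    case True
    moreover have "sqrt (2 * \<Delta> / pi) \<ge> 0" using \<Delta>0 by simp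
    moreover have "norm (p - q) = L" by (simp add: L_def norm_minus_commute)
    ultimately show ?thesis unfolding d_def \<Delta>_def[symmetric] by linarith
  next
    case False
    define s where "s = L - d"
    have d0: "d \<ge> 0" using inC[OF p p] by simp
    have s0: "s > 0" using False s_def by simp
    have L0: "L > 0" using False d0 by simp
    define u where "u = (1 / L) *\<^sub>R (q - p)"
    have uu: "u \<bullet> u = 1" using L0 by (simp add: u_def L_def power2_norm_eq_inner[symmetric] power2_eq_square)
    have nu: "norm u = 1" using L0 by (simp add: u_def L_def)
    have qpu: "(q - p) \<bullet> u = L" using L0 by (simp add: u_def L_def power2_norm_eq_inner[symmetric] power2_eq_square)
    define a where "a = (c - p) \<bullet> u"
    have ad: "a \<le> d"
    proof -
      have "a \<le> norm (c - p) * norm u" unfolding a_def by (rule norm_cauchy_schwarz)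
      also have "\<dots> \<le> d" using inC[OF assms(2) p] nu by simp
      finally show ?thesis .
    qed
    define h where "h = r - d + a"
    have hs: "h \<ge> s"
    proof -
      have "(q - c) \<bullet> u \<le> norm (q - c) * norm u" by (rule norm_cauchy_schwarz)
      also have "\<dots> \<le> r" using q nu by (simp add: dist_norm norm_minus_commute)
      finally have "(q - c) \<bullet> u \<le> r" .
      moreover have "(q - c) \<bullet> u = L - a" using qpu
        by (simp add: a_def inner_diff_left)
      ultimately show ?thesis by (simp add: h_def s_def)
    qed
    define k where "k = d - a"
    have k0: "k \<ge> 0" using ad k_def by simp
    have kh: "k + h = r" by (simp add: k_def h_def)
    define m where "m = c + k *\<^sub>R u"
    define HD where "HD = {x \<in> cball m h. (x - m) \<bullet> u > 0}"
    have sub: "HD \<subseteq> (C \<union> cball c r) - C"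
    proof
      fix x assume x: "x \<in> HD"
      define v where "v = x - m"
      have nv: "norm v \<le> h" and vu: "v \<bullet> u > 0" using x by (auto simp: HD_def v_def dist_norm norm_minus_commute)
      have vu2: "v \<bullet> u \<le> h"
        using norm_cauchy_schwarz[of v u] nu nv by simp
      have "(x - p) \<bullet> u = d + v \<bullet> u"
        by (simp add: v_def m_def k_def a_def inner_diff_left inner_add_left uu algebra_simps)
      then have "(x - p) \<bullet> u > d" using vu by simp
      moreover have "(x - p) \<bullet> u \<le> norm (x - p)" using norm_cauchy_schwarz[of "x - p" u] nu by simp
      ultimately have "x \<notin> C" using inC[of x p] p by force
      moreover have "x \<in> cball c r"
      proof -
        have xc: "x - c = k *\<^sub>R u + v" by (simp add: v_def m_def)
        have "(norm (x - c))^2 = k^2 + 2 * k * (v \<bullet> u) + (norm v)^2"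
          unfolding xc power2_norm_eq_inner
          by (simp add: inner_add_left inner_add_right uu inner_commute power2_eq_square algebra_simps)
        also have "\<dots> \<le> k^2 + 2 * k * h + h^2"
        proof -
          have "2 * k * (v \<bullet> u) \<le> 2 * k * h" using k0 vu2 by (intro mult_left_mono) auto
          moreover have "(norm v)^2 \<le> h^2" using nv by (intro power_mono) auto
          ultimately show ?thesis by simp
        qed
        also have "\<dots> = r^2" using kh by (simp add: power2_eq_square algebra_simps flip: kh)
        finally have "(norm (x - c))^2 \<le> r^2" .
        then have "norm (x - c) \<le> r" using assms(3) by (simp add: power2_le_iff_abs_le)
        then show ?thesis by (simp add: dist_norm norm_minus_commute)
      qed
      ultimately show "x \<in> (C \<union> cball c r) - C" by simp
    qed
    have h0: "h \<ge> 0" using hs s0 by simp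
    have u0: "u \<noteq> 0" using nu by auto
    have "pi * h^2 / 2 \<le> \<Delta>"
    proof -
      have "HD \<in> lmeasurable"
      proof -
        have "open {x. (x - m) \<bullet> u > 0}" by (intro open_Collect_less continuous_intros)
        moreover have "HD = cball m h \<inter> {x. (x - m) \<bullet> u > 0}" by (auto simp: HD_def)
        ultimately show ?thesis
          by (metis borel_open fmeasurable_Int_fmeasurable lmeasurable_cball sets_completionI_sets sets_lborel)
      qed
      then have "measure lebesgue HD \<le> \<Delta>" unfolding \<Delta>eq
        by (intro measure_mono_fmeasurable sub) (auto intro: fmeasurableD fmeasurable_Diff Um Cs)
      then show ?thesis using half_disc[OF h0 u0, of m] by (simp add: HD_def)
    qed
    moreover have "pi * s^2 / 2 \<le> pi * h^2 / 2" using hs s0 by (simp add: power_mono)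
    ultimately have "pi * s^2 \<le> 2 * \<Delta>" by linarith
    then have "s^2 \<le> 2 * \<Delta> / pi" by (simp add: field_simps)
    then have "s \<le> sqrt (2 * \<Delta> / pi)" by (rule real_le_rsqrt)
    then show ?thesis by (simp add: s_def L_def d_def \<Delta>_def norm_minus_commute)
  qed
qed

theorem lemma4:
  fixes C :: "(real^2) set" and c :: "real^2" and r :: real
  assumes "compact C" and "c \<in> C" and "r > 0"
  shows "diameter (C \<union> cball c r) \<le>
    max (diameter C + sqrt (2 * (measure lebesgue (C \<union> cball c r) - measure lebesgue C) / pi))
        (sqrt (4 * measure lebesgue (C \<union> cball c r) / pi))"
proof (rule diameter_le)
  show "C \<union> cball c r \<noteq> {} \<or> 0 \<le> max (diameter C + sqrt (2 * (measure lebesgue (C \<union> cball c r) - measure lebesgue C) / pi))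
        (sqrt (4 * measure lebesgue (C \<union> cball c r) / pi))" using assms(2) by auto
  define M1 where "M1 = diameter C + sqrt (2 * (measure lebesgue (C \<union> cball c r) - measure lebesgue C) / pi)"
  define M2 where "M2 = sqrt (4 * measure lebesgue (C \<union> cball c r) / pi)"
  have bC: "bounded C" using assms(1) compact_imp_bounded by blast
  have Um: "C \<union> cball c r \<in> lmeasurable" using assms(1) by (intro lmeasurable_compact compact_Un compact_cball)
  have "measure lebesgue C \<le> measure lebesgue (C \<union> cball c r)"
    using assms(1) Um by (intro measure_mono_fmeasurable) (auto intro: lmeasurable_compact fmeasurableD)
  then have sq0: "sqrt (2 * (measure lebesgue (C \<union> cball c r) - measure lebesgue C) / pi) \<ge> 0" by simp
  have "pi * r^2 \<le> measure lebesgue (C \<union> cball c r)"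
    using cball_area[of r c] assms(3) Um
    by (metis fmeasurableD lmeasurable_cball measure_mono_fmeasurable sup.cobounded2 less_imp_le)
  then have "4 * r^2 \<le> 4 * measure lebesgue (C \<union> cball c r) / pi" by (simp add: field_simps)
  then have "sqrt (4 * r^2) \<le> M2" unfolding M2_def by (rule real_sqrt_le_mono)
  moreover have "sqrt (4 * r^2) = 2 * r" using assms(3) by (simp add: real_sqrt_mult)
  ultimately have rM2: "2 * r \<le> M2" by simp
  fix x y assume x: "x \<in> C \<union> cball c r" and y: "y \<in> C \<union> cball c r"
  have "norm (x - y) \<le> M1 \<or> norm (x - y) \<le> M2"
  proof -
    { assume "x \<in> C" "y \<in> C"
      then have "norm (x - y) \<le> diameter C" using diameter_bounded_bound[OF bC] by (simp add: dist_norm)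
      then have ?thesis using sq0 unfolding M1_def by linarith }
    moreover
    { assume "x \<in> C" "y \<in> cball c r"
      then have ?thesis using key[OF assms(1,2,3)] unfolding M1_def by blast }
    moreover
    { assume "y \<in> C" "x \<in> cball c r"
      then have ?thesis using key[OF assms(1,2,3), of y x] unfolding M1_def by (simp add: norm_minus_commute) }
    moreover
    { assume "x \<in> cball c r" "y \<in> cball c r"
      then have "norm (x - y) \<le> 2 * r"
        using norm_triangle_ineq4[of "x - c" "y - c"] by (simp add: dist_norm norm_minus_commute)
      then have ?thesis using rM2 by linarith }
    ultimately show ?thesis using x y by blast
  qed
  then show "norm (x - y) \<le> max M1 M2" by auto
qed

end
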